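(* Let $H$ be as in the context. Then, as $p\to0$, \[ H(p)\sim(\sigma p)^{2/\mu}\left(2\Gamma(1-\mu)\right)^{-1/\mu}. \]
   Context: Fix $\mu\in(0,1)$, $\sigma>0$. Let $\Phi(a)=\mu(1+a)^{-1-\mu}$ for $a\ge0$ and $\omega(z)=\frac{1}{\sigma\sqrt{2\pi}}e^{-z^2/(2\sigma^2)}$ (a Gaussian of variance $\sigma^2$). For $p\in\mathbb{R}$, $H(p)\ge0$ is the unique solution of $\int_0^\infty\Phi(a)e^{-aH(p)}\,\mathrm{d}a\cdot\int_{\mathbb{R}}\omega(z)e^{zp}\,\mathrm{d}z=1$. $\Gamma$ denotes the Gamma function. *)

theory Defs
  imports "HOL-Analysis.Analysis" "HOL-Library.Landau_Symbols"
begin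

definition Phi :: "real \<Rightarrow> real \<Rightarrow> real" where
  "Phi \<mu> a = \<mu> * (1 + a) powr (-1 - \<mu>)"

definition omega :: "real \<Rightarrow> real \<Rightarrow> real" where
  "omega \<sigma> z = 1 / (\<sigma> * sqrt (2 * pi)) * exp (- z\<^sup>2 / (2 * \<sigma>\<^sup>2))"

definition Hfun :: "real \<Rightarrow> real \<Rightarrow> real \<Rightarrow> real" where
  "Hfun \<mu> \<sigma> p = (THE h. h \<ge> 0 \<and>
     (LINT a:{0..}|lborel. Phi \<mu> a * exp (- a * h)) *
     (LINT z|lborel. omega \<sigma> z * exp (z * p)) = 1)"

end

theory Submission
  imports Defs "HOL-Probability.Probability" "HOL-Real_Asymp.Real_Asymp"
begin

lemma gauss_mgf:
  assumes s: "0 < \<sigma>"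
  shows "(LINT z|lborel. omega \<sigma> z * exp (z * p)) = exp (\<sigma>\<^sup>2 * p\<^sup>2 / 2)"
proof -
  have eq: "omega \<sigma> z * exp (z * p) = exp (\<sigma>\<^sup>2 * p\<^sup>2 / 2) * normal_density (\<sigma>\<^sup>2 * p) \<sigma> z" for z
  proof -
    have "sqrt (2 * pi * \<sigma>\<^sup>2) = \<sigma> * sqrt (2 * pi)"
      using s by (simp add: real_sqrt_mult mult.commute)
    moreover have "- z\<^sup>2 / (2 * \<sigma>\<^sup>2) + z * p = \<sigma>\<^sup>2 * p\<^sup>2 / 2 + (-(z - \<sigma>\<^sup>2 * p)\<^sup>2 / (2 * \<sigma>\<^sup>2))"
      using s by (simp add: field_simps power2_eq_square)
    ultimately show ?thesis
      unfolding omega_def normal_density_def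
      by (simp add: exp_add[symmetric] mult_exp_exp)
  qed
  have n1: "integral\<^sup>L lborel (normal_density (\<sigma>\<^sup>2 * p) \<sigma>) = 1"
    using integral_normal_density[OF s, of "\<sigma>\<^sup>2 * p"] by simp
  show ?thesis unfolding eq integral_mult_right_zero n1 by simp
qed

lemma dc_within:
  fixes f :: "real \<Rightarrow> real \<Rightarrow> real" and S :: "real set"
  assumes w: "integrable lborel w"
    and meas: "\<And>t. t \<in> S \<Longrightarrow> f t \<in> borel_measurable lborel"
    and gmeas: "g \<in> borel_measurable lborel"
    and bound: "\<And>t u. t \<in> S \<Longrightarrow> norm (f t u) \<le> w u"
    and lim: "\<And>u. ((\<lambda>t. f t u) \<longlongrightarrow> g u) (at x within S)"
  shows "((\<lambda>t. integral\<^sup>L lborel (f t)) \<longlongrightarrow> integral\<^sup>L lborel g) (at x within S)"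
  unfolding tendsto_at_iff_sequentially
proof (intro allI impI)
  fix X :: "nat \<Rightarrow> real"
  assume X: "\<forall>i. X i \<in> S - {x}" "X \<longlonglongrightarrow> x"
  show "((\<lambda>t. integral\<^sup>L lborel (f t)) \<circ> X) \<longlonglongrightarrow> integral\<^sup>L lborel g"
    unfolding comp_def
  proof (rule integral_dominated_convergence[where w=w])
    show "\<And>i. f (X i) \<in> borel_measurable lborel" using X meas by auto
    show "AE u in lborel. (\<lambda>i. f (X i) u) \<longlonglongrightarrow> g u"
    proof (rule AE_I2)
      fix u
      have "((\<lambda>t. f t u) \<circ> X) \<longlonglongrightarrow> g u"
        using lim[of u] X unfolding tendsto_at_iff_sequentially by blast
      then show "(\<lambda>i. f (X i) u) \<longlonglongrightarrow> g u" by (simp add: comp_def)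
    qed
    show "\<And>i. AE u in lborel. norm (f (X i) u) \<le> w u" using X bound by auto
  qed (use w gmeas in auto)
qed

lemma gamma_lint:
  fixes \<mu> :: real
  assumes "0 < \<mu>" "\<mu> < 1"
  shows "set_integrable lborel {0<..} (\<lambda>u. exp (- u) * u powr (- \<mu>))"
    and "(LINT u:{0<..}|lborel. exp (- u) * u powr (- \<mu>)) = Gamma (1 - \<mu>)"
proof -
  define f :: "real \<Rightarrow> real" where "f = (\<lambda>u. u powr (- \<mu>) / exp u)"
  have hi: "(f has_integral Gamma (1 - \<mu>)) {0..}"
    using Gamma_integral_real[of "1 - \<mu>"] assms by (simp add: f_def)
  have "f absolutely_integrable_on {0..}"
    using hi by (intro nonnegative_absolutely_integrable_1) (auto simp: f_def)
  then have "set_integrable lborel {0..} f"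
    unfolding set_integrable_def
    by (subst (asm) integrable_completion) (auto simp: f_def)
  moreover have "(LINT u:{0..}|lborel. f u) = Gamma (1 - \<mu>)"
    using set_borel_integral_eq_integral(2)[OF calculation] hi by (simp add: integral_unique)
  moreover have fe: "f = (\<lambda>u. exp (- u) * u powr (- \<mu>))"
    by (auto simp: f_def exp_minus field_simps)
  moreover have "set_integrable lborel {0..} f = set_integrable lborel {0<..} f"
    by (rule set_integrable_discrete_difference[where X="{0}"]) auto
  moreover have "(LINT u:{0..}|lborel. f u) = (LINT u:{0<..}|lborel. f u)"
    by (rule set_integral_discrete_difference[where X="{0}"]) auto
  ultimately show "set_integrable lborel {0<..} (\<lambda>u. exp (- u) * u powr (- \<mu>))"
    "(LINT u:{0<..}|lborel. exp (- u) * u powr (- \<mu>)) = Gamma (1 - \<mu>)" by auto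
qed


lemma ftc_L:
  fixes \<mu> h :: real
  assumes m: "0 < \<mu>" and h: "0 \<le> h"
  shows "set_integrable lborel {0<..} (\<lambda>a. Phi \<mu> a * exp (- a * h) + h * ((1 + a) powr (- \<mu>) * exp (- a * h)))"
    and "(LINT a:{0<..}|lborel. Phi \<mu> a * exp (- a * h) + h * ((1 + a) powr (- \<mu>) * exp (- a * h))) = 1"
proof -
  define f where "f = (\<lambda>a::real. Phi \<mu> a * exp (- a * h) + h * ((1 + a) powr (- \<mu>) * exp (- a * h)))"
  define F where "F = (\<lambda>a::real. - ((1 + a) powr (- \<mu>) * exp (- a * h)))"
  have ein: "einterval 0 \<infinity> = ({0<..} :: real set)"
    by (auto simp: einterval_def zero_ereal_def)
  have der: "DERIV F x :> f x" if "0 < ereal x" for x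
  proof -
    have x: "0 < x" using that by (simp add: zero_ereal_def)
    show ?thesis unfolding F_def f_def Phi_def
      using x
      apply (auto intro!: derivative_eq_intros)
      apply (subgoal_tac "- \<mu> - 1 = - 1 - \<mu>")
       apply (simp add: algebra_simps)
      apply simp
      done
  qed
  have cont: "isCont f x" if "0 < ereal x" for x
  proof -
    have x: "0 < x" using that by (simp add: zero_ereal_def)
    show ?thesis unfolding f_def Phi_def using x
      by (auto intro!: continuous_intros)
  qed
  have nonneg: "AE x in lborel. 0 < ereal x \<longrightarrow> ereal x < \<infinity> \<longrightarrow> 0 \<le> f x"
    by (auto simp: f_def Phi_def zero_ereal_def intro!: add_nonneg_nonneg mult_nonneg_nonneg h m less_imp_le[OF m])
  have A: "((F \<circ> real_of_ereal) \<longlongrightarrow> -1) (at_right 0)"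
    unfolding zero_ereal_def ereal_tendsto_simps F_def
    by (rule tendsto_eq_intros refl | simp)+
  have B: "((F \<circ> real_of_ereal) \<longlongrightarrow> 0) (at_left \<infinity>)"
    unfolding ereal_tendsto_simps F_def
  proof -
    have p0: "((\<lambda>a::real. (1 + a) powr (- \<mu>)) \<longlongrightarrow> 0) at_top"
      using m by real_asymp
    have "((\<lambda>a::real. (1 + a) powr (- \<mu>) * exp (- a * h)) \<longlongrightarrow> 0) at_top"
    proof (rule tendsto_sandwich[OF _ _ tendsto_const p0])
      show "\<forall>\<^sub>F a in at_top. 0 \<le> (1 + a) powr - \<mu> * exp (- a * h)" by simp
      show "\<forall>\<^sub>F a in at_top. (1 + a) powr - \<mu> * exp (- a * h) \<le> (1 + a) powr - \<mu>"
        using eventually_ge_at_top[of "0::real"]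
      proof eventually_elim
        case (elim a)
        have "exp (- a * h) \<le> 1" using elim h by (simp add: mult_nonneg_nonneg)
        then show ?case by (simp add: mult_left_le)
      qed
    qed
    from tendsto_minus[OF this] show "((\<lambda>a. - ((1 + a) powr - \<mu> * exp (- a * h))) \<longlongrightarrow> 0) at_top" by simp
  qed
  have r: "set_integrable lborel (einterval 0 \<infinity>) f" "(LBINT x=0..\<infinity>. f x) = 0 - (-1)"
    using interval_integral_FTC_nonneg[of 0 \<infinity> F f, OF _ der cont nonneg A B] by auto
  then show "set_integrable lborel {0<..} (\<lambda>a. Phi \<mu> a * exp (- a * h) + h * ((1 + a) powr (- \<mu>) * exp (- a * h)))"
    "(LINT a:{0<..}|lborel. Phi \<mu> a * exp (- a * h) + h * ((1 + a) powr (- \<mu>) * exp (- a * h))) = 1"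
    unfolding ein interval_lebesgue_integral_0_infty f_def by auto
qed


definition LL :: "real \<Rightarrow> real \<Rightarrow> real" where
  "LL \<mu> h = (LINT a:{0<..}|lborel. Phi \<mu> a * exp (- a * h))"

definition KK :: "real \<Rightarrow> real \<Rightarrow> real" where
  "KK \<mu> h = (LINT u:{0<..}|lborel. exp (- u) * (h + u) powr (- \<mu>))"

lemma L_int:
  fixes \<mu> h :: real
  assumes m: "0 < \<mu>" and h: "0 \<le> h"
  shows "set_integrable lborel {0<..} (\<lambda>a. Phi \<mu> a * exp (- a * h))"
    and "set_integrable lborel {0<..} (\<lambda>a. h * ((1 + a) powr (- \<mu>) * exp (- a * h)))"
proof -
  note I = ftc_L(1)[OF m h]
  show "set_integrable lborel {0<..} (\<lambda>a. Phi \<mu> a * exp (- a * h))"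
    using I unfolding set_integrable_def
    apply (rule Bochner_Integration.integrable_bound)
     apply (simp add: Phi_def)
    apply (rule AE_I2)
    using m h by (auto simp: Phi_def indicator_def)
  show "set_integrable lborel {0<..} (\<lambda>a. h * ((1 + a) powr (- \<mu>) * exp (- a * h)))"
    using I unfolding set_integrable_def
    apply (rule Bochner_Integration.integrable_bound)
     apply simp
    apply (rule AE_I2)
    using m h by (auto simp: Phi_def indicator_def)
qed

lemma subst_K:
  fixes \<mu> h :: real
  assumes h: "0 < h"
  shows "h * (LINT a:{0<..}|lborel. (1 + a) powr (- \<mu>) * exp (- a * h)) = h powr \<mu> * KK \<mu> h"
proof -
  have pt: "indicator {0<..} (0 + 1/h * u) *\<^sub>R ((1 + (0 + 1/h * u)) powr (- \<mu>) * exp (- (0 + 1/h * u) * h))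
      = h powr \<mu> * (indicator {0<..} u *\<^sub>R (exp (- u) * (h + u) powr (- \<mu>)))" for u :: real
  proof (cases "0 < u")
    case True
    have "1 + u / h = (h + u) / h" using h by (simp add: field_simps)
    then have "(1 + u / h) powr (- \<mu>) = (h + u) powr (- \<mu>) / h powr (- \<mu>)"
      using h True by (simp add: powr_divide)
    also have "\<dots> = h powr \<mu> * (h + u) powr (- \<mu>)"
      by (simp add: powr_minus field_simps)
    finally show ?thesis using True h by (simp add: indicator_def)
  next
    case False
    then show ?thesis using h by (simp add: indicator_def field_simps)
  qed
  have "(LINT a:{0<..}|lborel. (1 + a) powr (- \<mu>) * exp (- a * h))
      = \<bar>1/h\<bar> *\<^sub>R (\<integral>u. indicator {0<..} (0 + 1/h * u) *\<^sub>R ((1 + (0 + 1/h * u)) powr (- \<mu>) * exp (- (0 + 1/h * u) * h)) \<partial>lborel)"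
    unfolding set_lebesgue_integral_def
    by (rule lborel_integral_real_affine) (use h in simp)
  also have "\<dots> = 1/h * (h powr \<mu> * KK \<mu> h)"
    unfolding pt KK_def set_lebesgue_integral_def using h by simp
  finally show ?thesis using h by simp
qed

lemma L_eq:
  fixes \<mu> h :: real
  assumes m: "0 < \<mu>" and h: "0 \<le> h"
  shows "LL \<mu> h = 1 - h powr \<mu> * KK \<mu> h"
proof -
  have "1 = (LINT a:{0<..}|lborel. Phi \<mu> a * exp (- a * h) + h * ((1 + a) powr (- \<mu>) * exp (- a * h)))"
    using ftc_L(2)[OF m h] by simp
  also have "\<dots> = LL \<mu> h + (LINT a:{0<..}|lborel. h * ((1 + a) powr (- \<mu>) * exp (- a * h)))"
    unfolding LL_def by (rule set_integral_add(2)[OF L_int[OF m h]])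
  also have "(LINT a:{0<..}|lborel. h * ((1 + a) powr (- \<mu>) * exp (- a * h))) = h powr \<mu> * KK \<mu> h"
  proof (cases "h = 0")
    case True then show ?thesis by simp
  next
    case False
    then show ?thesis using subst_K[of h \<mu>] h by simp
  qed
  finally show ?thesis by simp
qed


lemma K_cont:
  fixes \<mu> x :: real
  assumes m: "0 < \<mu>" "\<mu> < 1" and x: "0 \<le> x"
  shows "((\<lambda>t. KK \<mu> t) \<longlongrightarrow> KK \<mu> x) (at x within {0..})"
proof -
  define f where "f = (\<lambda>t u. indicator {0<..} u *\<^sub>R (exp (- u) * (t + u) powr (- \<mu>)) :: real)"
  define w where "w = (\<lambda>u. indicator {0<..} u *\<^sub>R (exp (- u) * u powr (- \<mu>)) :: real)"
  have KKf: "KK \<mu> t = integral\<^sup>L lborel (f t)" for t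
    unfolding KK_def f_def set_lebesgue_integral_def by simp
  show ?thesis unfolding KKf
  proof (rule dc_within[where w=w])
    show "integrable lborel w" using gamma_lint(1)[OF m] unfolding set_integrable_def w_def .
    show "\<And>t. t \<in> {0..} \<Longrightarrow> f t \<in> borel_measurable lborel" unfolding f_def by simp
    show "f x \<in> borel_measurable lborel" unfolding f_def by simp
    show "norm (f t u) \<le> w u" if "t \<in> {0..}" for t u
    proof (cases "0 < u")
      case True
      have "(t + u) powr (- \<mu>) \<le> u powr (- \<mu>)"
        by (rule powr_mono2') (use True that m in auto)
      then show ?thesis using True unfolding f_def w_def by (simp add: mult_left_mono)
    next
      case False then show ?thesis by (simp add: f_def w_def)
    qed
    show "((\<lambda>t. f t u) \<longlongrightarrow> f x u) (at x within {0..})" for u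
    proof (cases "0 < u")
      case True
      have "((\<lambda>t. exp (- u) * (t + u) powr (- \<mu>)) \<longlongrightarrow> exp (- u) * (x + u) powr (- \<mu>)) (at x within {0..})"
        using True x by (auto intro!: tendsto_intros)
      then show ?thesis using True unfolding f_def by simp
    next
      case False then show ?thesis by (simp add: f_def)
    qed
  qed
qed

lemma K0: "0 < \<mu> \<Longrightarrow> \<mu> < 1 \<Longrightarrow> KK \<mu> 0 = Gamma (1 - \<mu>)"
  unfolding KK_def using gamma_lint(2)[of \<mu>] by simp

lemma L_strict:
  fixes \<mu> h1 h2 :: real
  assumes m: "0 < \<mu>" and h: "0 \<le> h1" "h1 < h2"
  shows "LL \<mu> h2 < LL \<mu> h1"
proof -
  define d where "d = (\<lambda>a. indicator {0<..} a *\<^sub>R (Phi \<mu> a * exp (- a * h1) - Phi \<mu> a * exp (- a * h2)) :: real)"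
  have i1: "set_integrable lborel {0<..} (\<lambda>a. Phi \<mu> a * exp (- a * h1))" using L_int(1)[OF m h(1)] .
  have i2: "set_integrable lborel {0<..} (\<lambda>a. Phi \<mu> a * exp (- a * h2))" using L_int(1)[OF m] h by simp
  have diff: "LL \<mu> h1 - LL \<mu> h2 = integral\<^sup>L lborel d"
    unfolding LL_def d_def using set_integral_diff(2)[OF i1 i2]
    by (simp add: set_lebesgue_integral_def)
  have dint: "integrable lborel d"
    unfolding d_def using set_integral_diff(1)[OF i1 i2] by (simp add: set_integrable_def)
  have dpos: "0 < d a" if "0 < a" for a
  proof -
    have "exp (- a * h2) < exp (- a * h1)" using that h by simp
    moreover have "0 < Phi \<mu> a" using m that by (simp add: Phi_def)
    ultimately show ?thesis using that by (simp add: d_def)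
  qed
  have dnn: "0 \<le> d a" for a
    by (cases "0 < a") (use dpos[of a] in \<open>auto simp: d_def\<close>)
  have "integral\<^sup>L lborel d \<noteq> 0"
  proof
    assume "integral\<^sup>L lborel d = 0"
    then have "AE a in lborel. d a = 0"
      using integral_nonneg_eq_0_iff_AE[OF dint] dnn by auto
    then have "AE a in lborel. a \<notin> {0<..1::real}"
      by (rule AE_mp) (use dpos in \<open>auto intro!: AE_I2 dest: dpos\<close>)
    then have "emeasure lborel {0<..1::real} = 0"
      by (subst (asm) AE_iff_measurable[where N="{0<..1}"]) auto
    then show False by simp
  qed
  moreover have "0 \<le> integral\<^sup>L lborel d" using dnn by simp
  ultimately show ?thesis using diff by linarith
qed


lemma r_lim:
  fixes \<sigma> :: real assumes s: "0 < \<sigma>"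
  shows "((\<lambda>p. (1 - exp (- (\<sigma>\<^sup>2 * p\<^sup>2 / 2))) / (\<sigma>\<^sup>2 * p\<^sup>2 / 2)) \<longlongrightarrow> 1) (at 0)"
proof -
  have 1: "((\<lambda>x::real. (1 - exp (- x)) / x) \<longlongrightarrow> 1) (at 0)" by real_asymp
  have 2: "filterlim (\<lambda>p::real. \<sigma>\<^sup>2 * p\<^sup>2 / 2) (at 0) (at 0)"
  proof (rule filterlim_atI)
    show "((\<lambda>p::real. \<sigma>\<^sup>2 * p\<^sup>2 / 2) \<longlongrightarrow> 0) (at 0)" by (auto intro!: tendsto_eq_intros)
    show "\<forall>\<^sub>F p in at (0::real). \<sigma>\<^sup>2 * p\<^sup>2 / 2 \<noteq> 0"
      using s by (auto simp: eventually_at_filter)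
  qed
  show ?thesis using filterlim_compose[OF 1 2] by simp
qed

lemma L_def_eq:
  "(LINT a:{0..}|lborel. Phi \<mu> a * exp (- a * h)) = LL \<mu> h"
  unfolding LL_def by (rule set_integral_discrete_difference[where X="{0}"]) auto

definition JJ :: "real \<Rightarrow> real \<Rightarrow> real" where
  "JJ \<mu> h = h powr \<mu> * KK \<mu> h"

lemma J_strict:
  assumes m: "0 < \<mu>" and h: "0 \<le> h1" "h1 < h2"
  shows "JJ \<mu> h1 < JJ \<mu> h2"
  using L_strict[OF m h] L_eq[OF m, of h1] L_eq[OF m, of h2] h unfolding JJ_def by simp

lemma J_mono:
  assumes m: "0 < \<mu>" and h: "0 \<le> h1" "h1 \<le> h2"
  shows "JJ \<mu> h1 \<le> JJ \<mu> h2"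
  using J_strict[OF m, of h1 h2] h by (cases "h1 = h2") auto

lemma J0: "JJ \<mu> 0 = 0" by (simp add: JJ_def)

lemma J_cont:
  assumes m: "0 < \<mu>" "\<mu> < 1"
  shows "continuous_on {0..} (JJ \<mu>)"
  unfolding continuous_on_def
proof (intro ballI)
  fix x :: real assume x: "x \<in> {0..}"
  have "((\<lambda>t. t powr \<mu>) \<longlongrightarrow> x powr \<mu>) (at x within {0..})"
    using m x by (intro tendsto_intros) (auto simp: eventually_at_filter)
  then show "(JJ \<mu> \<longlongrightarrow> JJ \<mu> x) (at x within {0..})"
    unfolding JJ_def using K_cont[OF m, of x] x by (intro tendsto_mult) auto
qed

lemma H_char:
  fixes \<mu> \<sigma> p h :: real
  assumes m: "0 < \<mu>" and h: "0 \<le> h" and e: "JJ \<mu> h = 1 - exp (- (\<sigma>\<^sup>2 * p\<^sup>2 / 2))"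
    and s: "0 < \<sigma>"
  shows "Hfun \<mu> \<sigma> p = h"
proof -
  have P: "(0 \<le> y \<and> (LINT a:{0..}|lborel. Phi \<mu> a * exp (- a * y)) *
     (LINT z|lborel. omega \<sigma> z * exp (z * p)) = 1) \<longleftrightarrow> (0 \<le> y \<and> JJ \<mu> y = 1 - exp (- (\<sigma>\<^sup>2 * p\<^sup>2 / 2)))" for y
  proof -
    have "(1 - JJ \<mu> y) * exp (\<sigma>\<^sup>2 * p\<^sup>2 / 2) = 1 \<longleftrightarrow> JJ \<mu> y = 1 - exp (- (\<sigma>\<^sup>2 * p\<^sup>2 / 2))"
      by (auto simp: exp_minus field_simps)
    then show ?thesis
      unfolding L_def_eq gauss_mgf[OF s]
      using L_eq[OF m, of y] unfolding JJ_def by auto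
  qed
  show ?thesis unfolding Hfun_def P
  proof (rule the_equality)
    show "0 \<le> h \<and> JJ \<mu> h = 1 - exp (- (\<sigma>\<^sup>2 * p\<^sup>2 / 2))" using h e by simp
    fix y assume y: "0 \<le> y \<and> JJ \<mu> y = 1 - exp (- (\<sigma>\<^sup>2 * p\<^sup>2 / 2))"
    show "y = h"
    proof (rule ccontr)
      assume "y \<noteq> h"
      then have "y < h \<or> h < y" by auto
      then show False using J_strict[OF m, of y h] J_strict[OF m, of h y] y h e by auto
    qed
  qed
qed


theorem proposition2:
  fixes \<mu> \<sigma> :: real
  assumes "0 < \<mu>" "\<mu> < 1" "0 < \<sigma>"
  shows "(\<lambda>p. Hfun \<mu> \<sigma> p) \<sim>[at 0]
         (\<lambda>p. ((\<sigma> * p)\<^sup>2) powr (1 / \<mu>) * (2 * Gamma (1 - \<mu>)) powr (- 1 / \<mu>))"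
proof -
  note m = assms(1,2) and s = assms(3)
  define r where "r = (\<lambda>p::real. 1 - exp (- (\<sigma>\<^sup>2 * p\<^sup>2 / 2)))"
  define H where "H = (\<lambda>p. Hfun \<mu> \<sigma> p)"
  define G where "G = Gamma (1 - \<mu>)"
  have G: "0 < G" unfolding G_def using m by (intro Gamma_real_pos) simp
  have r0: "(r \<longlongrightarrow> 0) (at 0)" unfolding r_def by (auto intro!: tendsto_eq_intros)
  have rpos: "0 < r p" if "p \<noteq> 0" for p
    unfolding r_def using that s by simp
  have rnn: "0 \<le> r p" for p unfolding r_def by simp
  have J1: "0 < JJ \<mu> 1" using J_strict[OF m(1), of 0 1] by (simp add: J0)
  have Jc: "continuous_on {0..1} (JJ \<mu>)"
    using J_cont[OF m] by (rule continuous_on_subset) auto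
  have evH: "\<forall>\<^sub>F p in at 0. 0 \<le> H p \<and> JJ \<mu> (H p) = r p"
  proof -
    have "\<forall>\<^sub>F p in at 0. r p < JJ \<mu> 1"
      using order_tendstoD(2)[OF r0 J1] .
    then show ?thesis
    proof eventually_elim
      case (elim p)
      obtain h where h: "0 \<le> h" "h \<le> 1" "JJ \<mu> h = r p"
        using IVT'[of "JJ \<mu>" 0 "r p" 1] Jc elim rnn[of p] by (auto simp: J0)
      have "H p = h" unfolding H_def
        by (rule H_char[OF m(1) h(1) _ s]) (use h(3) in \<open>simp add: r_def\<close>)
      then show ?case using h by simp
    qed
  qed
  have evP: "\<forall>\<^sub>F p in at (0::real). p \<noteq> 0" by (simp add: eventually_at_filter)
  have H0: "(H \<longlongrightarrow> 0) (at 0)"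
  proof (rule order_tendstoI)
    fix a :: real assume a0: "a < 0"
    show "\<forall>\<^sub>F p in at 0. a < H p" using evH by (rule eventually_mono) (use a0 in auto)
  next
    fix a :: real assume a: "0 < a"
    have "0 < JJ \<mu> a" using J_strict[OF m(1), of 0 a] a by (simp add: J0)
    from order_tendstoD(2)[OF r0 this] evH
    show "\<forall>\<^sub>F p in at 0. H p < a"
    proof eventually_elim
      case (elim p)
      show ?case
      proof (rule ccontr)
        assume "\<not> H p < a"
        then have "JJ \<mu> a \<le> JJ \<mu> (H p)" using J_mono[OF m(1), of a "H p"] a by auto
        then show False using elim by auto
      qed
    qed
  qed
  have KH: "((\<lambda>p. KK \<mu> (H p)) \<longlongrightarrow> G) (at 0)"
  proof -
    have "((\<lambda>p. KK \<mu> (H p)) \<longlongrightarrow> KK \<mu> 0) (at 0)"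
      apply (rule continuous_within_tendsto_compose[where S="{0..}" and f="KK \<mu>" and x=H])
        apply (simp add: continuous_within K_cont[OF m])
      using evH apply eventually_elim apply simp
      by (rule H0)
    then show ?thesis using K0[OF m] by (simp add: G_def)
  qed
  define q where "q = (\<lambda>p. (r p / (\<sigma>\<^sup>2 * p\<^sup>2 / 2)) * (G / KK \<mu> (H p)))"
  have q1: "(q \<longlongrightarrow> 1) (at 0)"
  proof -
    have "(q \<longlongrightarrow> 1 * (G / G)) (at 0)"
      unfolding q_def r_def using G
      by (intro tendsto_mult tendsto_divide r_lim[OF s] tendsto_const KH) auto
    then show ?thesis using G by simp
  qed
  have "((\<lambda>p. q p powr (1 / \<mu>)) \<longlongrightarrow> 1 powr (1 / \<mu>)) (at 0)"
    by (rule tendsto_powr[OF q1 tendsto_const]) simp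
  then have qp: "((\<lambda>p. q p powr (1 / \<mu>)) \<longlongrightarrow> 1) (at 0)" by simp
  have eq: "\<forall>\<^sub>F p in at 0. q p powr (1 / \<mu>) =
      H p / (((\<sigma> * p)\<^sup>2) powr (1 / \<mu>) * (2 * Gamma (1 - \<mu>)) powr (- 1 / \<mu>))"
    using evH evP
  proof eventually_elim
    case (elim p)
    have Hp: "0 < H p"
    proof (rule ccontr)
      assume "\<not> 0 < H p"
      then have "H p = 0" using elim by auto
      then show False using elim rpos[of p] by (simp add: J0)
    qed
    have e: "H p powr \<mu> * KK \<mu> (H p) = r p" using elim by (simp add: JJ_def)
    have Kne: "KK \<mu> (H p) \<noteq> 0" using e rpos[of p] elim by auto
    have sp: "0 < (\<sigma> * p)\<^sup>2" using elim s by simp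
    have "q p = H p powr \<mu> / ((\<sigma> * p)\<^sup>2 / (2 * G))"
      unfolding q_def using Kne G sp e[symmetric] s elim
      by (simp add: field_simps power_mult_distrib)
    then have "q p powr (1 / \<mu>) = (H p powr \<mu>) powr (1 / \<mu>) / ((\<sigma> * p)\<^sup>2 / (2 * G)) powr (1 / \<mu>)"
      using G sp by (simp add: powr_divide powr_mult)
    also have "(H p powr \<mu>) powr (1 / \<mu>) = H p" using m Hp by (simp add: powr_powr)
    also have "((\<sigma> * p)\<^sup>2 / (2 * G)) powr (1 / \<mu>) = ((\<sigma> * p)\<^sup>2) powr (1 / \<mu>) * (2 * G) powr (- 1 / \<mu>)"
      using G sp by (simp add: powr_divide powr_minus_divide divide_simps)
    finally show ?case by (simp add: G_def)
  qed
  show ?thesis unfolding H_def[symmetric]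
    by (rule asymp_equivI') (rule Lim_transform_eventually[OF qp eq])
qed

end
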